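(* Let $m_1,m_2\ge 0$ be integers and $\lambda=m_1\omega_1+m_2\omega_2$. Then in the representation ring of $\mathfrak{sl}_3$, \begin{align*} \psi_2(V_{\lambda}) &= \sum_{l=0}^{\min\{m_1,m_2\}}\sum_{k=0}^{m_1-l}(-1)^k\, V_{2\lambda-k\alpha_1-2l(\alpha_1+\alpha_2)} + \sum_{l=0}^{\min\{m_1,m_2\}}\sum_{k=0}^{m_2-l}(-1)^k\, V_{2\lambda-k\alpha_2-2l(\alpha_1+\alpha_2)} \\ &\quad - \sum_{l=0}^{\min\{m_1,m_2\}} V_{2\lambda-2l(\alpha_1+\alpha_2)}. \end{align*} Equivalently, writing $V_{a,b}=V_{a\omega_1+b\omega_2}$, the three sums are over $V_{2m_1-2k-2l,\,2m_2+k-2l}$, $V_{2m_1+k-2l,\,2m_2-2k-2l}$ and $V_{2m_1-2l,\,2m_2-2l}$ respectively.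
   Context: $\mathfrak{sl}_3$ has simple roots $\alpha_1=(1,-1,0)$, $\alpha_2=(0,1,-1)$ and fundamental weights $\omega_1=\frac13(2\alpha_1+\alpha_2)$, $\omega_2=\frac13(\alpha_1+2\alpha_2)$ (so $\alpha_1=2\omega_1-\omega_2$, $\alpha_2=-\omega_1+2\omega_2$). $V_\mu$ denotes the irreducible representation with dominant highest weight $\mu$. $\psi_2$ is the second Adams operation on the representation ring (virtual representations), i.e. the ring endomorphism characterized on characters by $\mathrm{ch}(\psi_2 V)(t)=\mathrm{ch}(V)(t^2)$ for $t$ in the maximal torus; equivalently, on characters viewed as symmetric functions in $x_1,x_2,x_3$ with $x_1x_2x_3=1$, it sends $f(x_1,x_2,x_3)$ to $f(x_1^2,x_2^2,x_3^2)$. *)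

theory Defs
  imports Complex_Main
begin

text \<open>Character of the irreducible sl3-representation V_{a w1 + b w2}, as a function on the
maximal torus {(x1,x2,x3). x1 x2 x3 = 1}: it is the Schur polynomial of the partition
(a+b, b, 0), written as the sum over Gelfand-Tsetlin patterns with top row (a+b, b, 0),
middle row (m1, m2) and bottom entry n.\<close>
definition sl3_char :: "nat \<Rightarrow> nat \<Rightarrow> complex \<Rightarrow> complex \<Rightarrow> complex \<Rightarrow> complex" where
  "sl3_char a b x1 x2 x3 =
     (\<Sum>m1\<in>{b..a+b}. \<Sum>m2\<in>{0..b}. \<Sum>n\<in>{m2..m1}.
        x1 ^ n * x2 ^ (m1 + m2 - n) * x3 ^ (a + 2*b - m1 - m2))"

definition adams2 :: "(complex \<Rightarrow> complex \<Rightarrow> complex \<Rightarrow> complex) \<Rightarrow> complex \<Rightarrow> complex \<Rightarrow> complex \<Rightarrow> complex" where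
  "adams2 f x1 x2 x3 = f (x1^2) (x2^2) (x3^2)"

end

theory Submission
  imports Defs
begin

definition asym3 :: "(complex \<Rightarrow> complex \<Rightarrow> complex \<Rightarrow> complex) \<Rightarrow> complex \<Rightarrow> complex \<Rightarrow> complex \<Rightarrow> complex" where
  "asym3 f x1 x2 x3 = f x1 x2 x3 - f x1 x3 x2 - f x2 x1 x3 + f x2 x3 x1 + f x3 x1 x2 - f x3 x2 x1"

definition alt3 :: "nat \<Rightarrow> nat \<Rightarrow> nat \<Rightarrow> complex \<Rightarrow> complex \<Rightarrow> complex \<Rightarrow> complex" where
  "alt3 p q r = asym3 (\<lambda>a b c. a^p * b^q * c^r)"

definition Pf :: "complex \<Rightarrow> complex \<Rightarrow> complex \<Rightarrow> complex" where
  "Pf a b c = (a+b)*(a+c)*(b+c)"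

definition Vd :: "complex \<Rightarrow> complex \<Rightarrow> complex \<Rightarrow> complex" where
  "Vd a b c = (a-b)*(a-c)*(b-c)"

lemma asym3_sum: "asym3 (\<lambda>a b c. \<Sum>k\<in>K. g k a b c) x1 x2 x3 = (\<Sum>k\<in>K. asym3 (g k) x1 x2 x3)"
  by (simp add: asym3_def sum_subtractf sum.distrib)

lemma asym3_add: "asym3 (\<lambda>a b c. f a b c + g a b c) x1 x2 x3 = asym3 f x1 x2 x3 + asym3 g x1 x2 x3"
  by (simp add: asym3_def algebra_simps)

lemma asym3_diff: "asym3 (\<lambda>a b c. f a b c - g a b c) x1 x2 x3 = asym3 f x1 x2 x3 - asym3 g x1 x2 x3"
  by (simp add: asym3_def algebra_simps)

lemma asym3_cmult: "asym3 (\<lambda>a b c. u * f a b c) x1 x2 x3 = u * asym3 f x1 x2 x3"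
  by (simp add: asym3_def algebra_simps)

lemma asym3_Pf: "Pf x1 x2 x3 * asym3 f x1 x2 x3 = asym3 (\<lambda>a b c. Pf a b c * f a b c) x1 x2 x3"
  by (simp add: asym3_def Pf_def algebra_simps)

lemma asym3_sym12: assumes "\<And>a b c. f a b c = f b a c" shows "asym3 f x1 x2 x3 = 0"
  using assms[of x1 x2 x3] assms[of x2 x3 x1] assms[of x3 x1 x2] by (simp add: asym3_def)

lemma asym3_sym23: assumes "\<And>a b c. f a b c = f a c b" shows "asym3 f x1 x2 x3 = 0"
  using assms[of x1 x2 x3] assms[of x2 x1 x3] assms[of x3 x1 x2] by (simp add: asym3_def)

lemma alt3_eq12[simp]: "alt3 p p r x1 x2 x3 = 0"
  by (simp add: alt3_def asym3_def algebra_simps)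

lemma alt3_eq23[simp]: "alt3 p q q x1 x2 x3 = 0"
  by (simp add: alt3_def asym3_def algebra_simps)

lemma alt3_shift: "(x1*x2*x3)^c * alt3 p q r x1 x2 x3 = alt3 (p+c) (q+c) (r+c) x1 x2 x3"
  by (simp add: alt3_def asym3_def algebra_simps power_add power_mult_distrib)

lemma alt3_sq: "alt3 p q r (x1^2) (x2^2) (x3^2) = alt3 (2*p) (2*q) (2*r) x1 x2 x3"
  by (simp add: alt3_def asym3_def power_mult[symmetric] mult.commute)

lemma Vd_sq: "Vd (x1^2) (x2^2) (x3^2) = Vd x1 x2 x3 * Pf x1 x2 x3"
  by (simp add: Vd_def Pf_def power2_eq_square algebra_simps)

lemma geo_alt: "((a::complex)+b) * (\<Sum>k\<in>{0..p}. (-1)^k * a^(p-k) * b^k) = a^(p+1) + (-1)^p * b^(p+1)"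
proof (induction p)
  case 0 then show ?case by simp
next
  case (Suc p)
  have "(\<Sum>k\<in>{0..Suc p}. (-1)^k * a^(Suc p-k) * b^k) = a * (\<Sum>k\<in>{0..p}. (-1)^k * a^(p-k) * b^k) + (-1)^(Suc p) * b^(Suc p)"
    by (simp add: sum_distrib_left Suc_diff_le mult.assoc mult.left_commute)
  then have "(a+b) * (\<Sum>k\<in>{0..Suc p}. (-1)^k * a^(Suc p-k) * b^k) = a * (a^(p+1) + (-1)^p * b^(p+1)) + (a+b)*(-1)^(Suc p) * b^(Suc p)"
    using Suc by (simp add: algebra_simps)
  then show ?case by (simp add: algebra_simps)
qed

lemma geo_diff: "((c::complex)-d) * (\<Sum>i\<in>{0..n}. c^i * d^(n-i)) = c^(n+1) - d^(n+1)"
proof (induction n)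
  case 0 then show ?case by simp
next
  case (Suc n)
  define S where "S = (\<Sum>i\<in>{0..n}. c^i * d^(n-i))"
  have h1: "(\<Sum>i\<in>{0..Suc n}. c^i * d^(Suc n-i)) = d * S + c^(Suc n)"
    unfolding S_def by (simp add: sum_distrib_left Suc_diff_le mult.assoc mult.left_commute)
  have IH: "(c-d)*S = c^(n+1) - d^(n+1)" using Suc unfolding S_def .
  have "(c-d)*(d * S + c^(Suc n)) = d*((c-d)*S) + (c-d)*c^(Suc n)" by (simp add: algebra_simps)
  also have "... = d*(c^(n+1) - d^(n+1)) + (c-d)*c^(Suc n)" by (simp only: IH)
  also have "... = c^(Suc n+1) - d^(Suc n+1)" by (simp add: algebra_simps)
  finally show ?case using h1 by simp
qed

lemma inner_geo: assumes "m2 \<le> m1"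
  shows "((x1::complex)-x2) * (\<Sum>n\<in>{m2..m1}. x1^n * x2^(m1+m2-n)) = x1^(m1+1)*x2^m2 - x1^m2*x2^(m1+1)"
proof -
  obtain d where d: "m1 = m2 + d" using assms le_Suc_ex by blast
  have "(\<Sum>n\<in>{m2..m1}. x1^n * x2^(m1+m2-n)) = (\<Sum>i\<in>{0..d}. x1^(i+m2) * x2^(m1+m2-(i+m2)))"
    using sum.shift_bounds_cl_nat_ivl[of "\<lambda>n. x1^n * x2^(m1+m2-n)" 0 m2 d] d by (simp add: add.commute)
  also have "... = (\<Sum>i\<in>{0..d}. (x1^m2*x2^m2) * (x1^i * x2^(d-i)))"
  proof (rule sum.cong[OF refl])
    fix i assume "i \<in> {0..d}"
    then have "m1+m2-(i+m2) = m2 + (d-i)" using d by auto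
    then have h1: "x2^(m1+m2-(i+m2)) = x2^m2 * x2^(d-i)" by (metis power_add)
    have h2: "x1^(i+m2) = x1^i * x1^m2" by (simp add: power_add)
    show "x1^(i+m2) * x2^(m1+m2-(i+m2)) = (x1^m2*x2^m2) * (x1^i * x2^(d-i))"
      by (simp only: h1 h2 mult_ac)
  qed
  also have "... = (x1^m2*x2^m2) * (\<Sum>i\<in>{0..d}. x1^i * x2^(d-i))" by (simp add: sum_distrib_left)
  finally have "(x1-x2) * (\<Sum>n\<in>{m2..m1}. x1^n * x2^(m1+m2-n)) = (x1^m2*x2^m2) * ((x1-x2) * (\<Sum>i\<in>{0..d}. x1^i * x2^(d-i)))"
    by (simp add: algebra_simps)
  also have "... = (x1^m2*x2^m2) * (x1^(d+1) - x2^(d+1))" by (simp only: geo_diff)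
  also have "... = x1^(m1+1)*x2^m2 - x1^m2*x2^(m1+1)" by (simp add: d power_add algebra_simps)
  finally show ?thesis .
qed

lemma char_alt: "Vd x1 x2 x3 * sl3_char a b x1 x2 x3 = alt3 (a+b+2) (b+1) 0 x1 x2 x3"
proof -
  define G where "G c d n = (\<Sum>i\<in>{0..n}. c^i * d^(n-i))" for c d :: complex and n :: nat
  have s1: "sl3_char a b x1 x2 x3 = (\<Sum>i\<in>{0..a}. \<Sum>j\<in>{0..b}. x3^(a-i) * x3^(b-j) *
       (\<Sum>n\<in>{j..b+i}. x1^n * x2^(b+i+j-n)))"
  proof -
    have "sl3_char a b x1 x2 x3 = (\<Sum>i\<in>{0..a}. \<Sum>m2\<in>{0..b}. \<Sum>n\<in>{m2..i+b}.
        x1 ^ n * x2 ^ (i+b + m2 - n) * x3 ^ (a + 2*b - (i+b) - m2))"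
      unfolding sl3_char_def
      using sum.shift_bounds_cl_nat_ivl[of "\<lambda>m1. \<Sum>m2\<in>{0..b}. \<Sum>n\<in>{m2..m1}.
        x1 ^ n * x2 ^ (m1 + m2 - n) * x3 ^ (a + 2*b - m1 - m2)" 0 b a]
      by (simp add: add.commute)
    also have "... = (\<Sum>i\<in>{0..a}. \<Sum>j\<in>{0..b}. x3^(a-i) * x3^(b-j) *
       (\<Sum>n\<in>{j..b+i}. x1^n * x2^(b+i+j-n)))"
    proof (intro sum.cong refl)
      fix i j assume i: "i \<in> {0..a}" and j: "j \<in> {0..b}"
      have "a + 2*b - (i+b) - j = (a-i) + (b-j)" using i j by auto
      then show "(\<Sum>n\<in>{j..i+b}. x1 ^ n * x2 ^ (i+b + j - n) * x3 ^ (a + 2*b - (i+b) - j)) =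
          x3^(a-i) * x3^(b-j) * (\<Sum>n\<in>{j..b+i}. x1^n * x2^(b+i+j-n))"
        by (simp add: sum_distrib_left power_add algebra_simps)
    qed
    finally show ?thesis .
  qed
  have "Vd x1 x2 x3 * sl3_char a b x1 x2 x3 = (\<Sum>i\<in>{0..a}. \<Sum>j\<in>{0..b}. ((x1-x3)*(x2-x3)*(x1-x2))*(x3^(a-i) * x3^(b-j) *
       (\<Sum>n\<in>{j..b+i}. x1^n * x2^(b+i+j-n))))"
    unfolding s1 Vd_def by (simp add: sum_distrib_left mult_ac)
  also have "... = (\<Sum>i\<in>{0..a}. \<Sum>j\<in>{0..b}. (x1-x3)*(x2-x3)*(x3^(a-i) * x3^(b-j) *
       (x1^(b+i+1)*x2^j - x1^j*x2^(b+i+1))))"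
  proof (intro sum.cong refl)
    fix i j assume "i \<in> {0..a}" "j \<in> {0..b}"
    then have "(x1-x2)*(\<Sum>n\<in>{j..b+i}. x1^n * x2^(b+i+j-n)) = x1^(b+i+1)*x2^j - x1^j*x2^(b+i+1)"
      using inner_geo[of j "b+i" x1 x2] by (simp add: add.commute add.left_commute)
    then show "((x1-x3)*(x2-x3)*(x1-x2))*(x3^(a-i) * x3^(b-j) * (\<Sum>n\<in>{j..b+i}. x1^n * x2^(b+i+j-n))) =
       (x1-x3)*(x2-x3)*(x3^(a-i) * x3^(b-j) * (x1^(b+i+1)*x2^j - x1^j*x2^(b+i+1)))"
      by (metis (no_types, lifting) mult.assoc mult.left_commute)
  qed
  also have "... = (x1-x3)*(x2-x3)*((\<Sum>i\<in>{0..a}. \<Sum>j\<in>{0..b}. x3^(a-i) * x3^(b-j) * (x1^(b+i+1)*x2^j))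
       - (\<Sum>i\<in>{0..a}. \<Sum>j\<in>{0..b}. x3^(a-i) * x3^(b-j) * (x1^j*x2^(b+i+1))))"
    by (simp add: sum_distrib_left sum_subtractf right_diff_distrib)
  also have "... = (x1-x3)*(x2-x3)*(x1^(b+1) * G x1 x3 a * G x2 x3 b - x2^(b+1) * G x2 x3 a * G x1 x3 b)"
  proof -
    have e1: "x1^(b+1) * G x1 x3 a * G x2 x3 b = (\<Sum>i\<in>{0..a}. \<Sum>j\<in>{0..b}. x3^(a-i) * x3^(b-j) * (x1^(b+i+1)*x2^j))"
    proof -
      have "x1^(b+1) * G x1 x3 a * G x2 x3 b = (\<Sum>i\<in>{0..a}. x1^(b+1)*(x1^i*x3^(a-i))) * (\<Sum>j\<in>{0..b}. x2^j*x3^(b-j))"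
        by (simp add: G_def sum_distrib_left)
      also have "... = (\<Sum>i\<in>{0..a}. \<Sum>j\<in>{0..b}. (x1^(b+1)*(x1^i*x3^(a-i))) * (x2^j*x3^(b-j)))"
        by (rule sum_product)
      also have "... = (\<Sum>i\<in>{0..a}. \<Sum>j\<in>{0..b}. x3^(a-i) * x3^(b-j) * (x1^(b+i+1)*x2^j))"
        by (intro sum.cong refl) (simp add: power_add mult_ac)
      finally show ?thesis .
    qed
    have e2: "x2^(b+1) * G x2 x3 a * G x1 x3 b = (\<Sum>i\<in>{0..a}. \<Sum>j\<in>{0..b}. x3^(a-i) * x3^(b-j) * (x1^j*x2^(b+i+1)))"
    proof -
      have "x2^(b+1) * G x2 x3 a * G x1 x3 b = (\<Sum>i\<in>{0..a}. x2^(b+1)*(x2^i*x3^(a-i))) * (\<Sum>j\<in>{0..b}. x1^j*x3^(b-j))"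
        by (simp add: G_def sum_distrib_left)
      also have "... = (\<Sum>i\<in>{0..a}. \<Sum>j\<in>{0..b}. (x2^(b+1)*(x2^i*x3^(a-i))) * (x1^j*x3^(b-j)))"
        by (rule sum_product)
      also have "... = (\<Sum>i\<in>{0..a}. \<Sum>j\<in>{0..b}. x3^(a-i) * x3^(b-j) * (x1^j*x2^(b+i+1)))"
        by (intro sum.cong refl) (simp add: power_add mult_ac)
      finally show ?thesis .
    qed
    show ?thesis unfolding e1 e2 ..
  qed
  also have "... = x1^(b+1) * ((x1-x3)*G x1 x3 a) * ((x2-x3)*G x2 x3 b) - x2^(b+1) * ((x2-x3)*G x2 x3 a) * ((x1-x3) * G x1 x3 b)"
    by (simp add: algebra_simps)
  also have "... = x1^(b+1) * (x1^(a+1) - x3^(a+1)) * (x2^(b+1) - x3^(b+1)) - x2^(b+1) * (x2^(a+1) - x3^(a+1)) * (x1^(b+1) - x3^(b+1))"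
    unfolding G_def geo_diff ..
  also have "... = alt3 (a+b+2) (b+1) 0 x1 x2 x3"
    by (simp add: alt3_def asym3_def power_add algebra_simps)
  finally show ?thesis .
qed

lemma key:
  assumes hE: "E = F + 2*p + 1" and hF: "F = G + 2*q + 1"
  shows "Pf x1 x2 x3 * ((\<Sum>k\<in>{0..p}. (-1)^k * alt3 (E-k) (F+k) G x1 x2 x3)
     + (\<Sum>k\<in>{0..q}. (-1)^k * alt3 E (F-k) (G+k) x1 x2 x3) - alt3 E F G x1 x2 x3)
   = alt3 (E+2) (F+1) G x1 x2 x3 - alt3 E (F+1) (G+2) x1 x2 x3"
proof -
  define g1 where "g1 a b c = (\<Sum>k\<in>{0..p}. (-1)^k * (a^(E-k) * b^(F+k) * c^G))" for a b c :: complex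
  define g2 where "g2 a b c = (\<Sum>k\<in>{0..q}. (-1)^k * (a^E * b^(F-k) * c^(G+k)))" for a b c :: complex
  define f1 where "f1 a b c = (a+c)*(b+c)*(a^(E+1)*b^F*c^G)" for a b c :: complex
  define h1 where "h1 a b c = (a+c)*(b+c)*c^G*((-1)^p * (a*b)^(F+p+1))" for a b c :: complex
  define f2 where "f2 a b c = (a+b)*(a+c)*(a^E*b^(F+1)*c^G)" for a b c :: complex
  define h2 where "h2 a b c = (a+b)*(a+c)*a^E*((-1)^q * (b*c)^(G+q+1))" for a b c :: complex
  have T1: "(\<Sum>k\<in>{0..p}. (-1)^k * alt3 (E-k) (F+k) G x1 x2 x3) = asym3 g1 x1 x2 x3"
    unfolding g1_def by (simp add: asym3_sum asym3_cmult alt3_def)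
  have T2: "(\<Sum>k\<in>{0..q}. (-1)^k * alt3 E (F-k) (G+k) x1 x2 x3) = asym3 g2 x1 x2 x3"
    unfolding g2_def by (simp add: asym3_sum asym3_cmult alt3_def)
  have P1: "Pf a b c * g1 a b c = f1 a b c + h1 a b c" for a b c
  proof -
    have "g1 a b c = (a^(F+p+1)*b^F*c^G) * (\<Sum>k\<in>{0..p}. (-1)^k * a^(p-k) * b^k)"
      unfolding g1_def sum_distrib_left
    proof (intro sum.cong refl)
      fix k assume "k \<in> {0..p}"
      then have "E - k = (F+p+1) + (p-k)" using hE by auto
      then show "(-1)^k * (a^(E-k) * b^(F+k) * c^G) = a^(F+p+1)*b^F*c^G * ((-1)^k * a^(p-k) * b^k)"
        by (simp add: power_add mult_ac)
    qed
    then have "Pf a b c * g1 a b c = (a+c)*(b+c)*(a^(F+p+1)*b^F*c^G) * ((a+b) * (\<Sum>k\<in>{0..p}. (-1)^k * a^(p-k) * b^k))"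
      by (simp add: Pf_def mult_ac)
    also have "... = (a+c)*(b+c)*(a^(F+p+1)*b^F*c^G) * (a^(p+1) + (-1)^p * b^(p+1))"
      by (simp only: geo_alt)
    also have "... = f1 a b c + h1 a b c"
    proof -
      have hE': "E = F+p+p+1" using hE by simp
      show ?thesis unfolding f1_def h1_def hE' by (simp add: power_add power_mult_distrib algebra_simps)
    qed
    finally show ?thesis .
  qed
  have P2: "Pf a b c * g2 a b c = f2 a b c + h2 a b c" for a b c
  proof -
    have "g2 a b c = (a^E*b^(G+q+1)*c^G) * (\<Sum>k\<in>{0..q}. (-1)^k * b^(q-k) * c^k)"
      unfolding g2_def sum_distrib_left
    proof (intro sum.cong refl)
      fix k assume "k \<in> {0..q}"
      then have "F - k = (G+q+1) + (q-k)" using hF by auto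
      then show "(-1)^k * (a^E * b^(F-k) * c^(G+k)) = a^E*b^(G+q+1)*c^G * ((-1)^k * b^(q-k) * c^k)"
        by (simp add: power_add mult_ac)
    qed
    then have "Pf a b c * g2 a b c = (a+b)*(a+c)*(a^E*b^(G+q+1)*c^G) * ((b+c) * (\<Sum>k\<in>{0..q}. (-1)^k * b^(q-k) * c^k))"
      by (simp add: Pf_def mult_ac)
    also have "... = (a+b)*(a+c)*(a^E*b^(G+q+1)*c^G) * (b^(q+1) + (-1)^q * c^(q+1))"
      by (simp only: geo_alt)
    also have "... = f2 a b c + h2 a b c"
    proof -
      have hF': "F = G+q+q+1" using hF by simp
      show ?thesis unfolding f2_def h2_def hF' by (simp add: power_add power_mult_distrib algebra_simps)
    qed
    finally show ?thesis .
  qed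
  have Z1: "asym3 h1 x1 x2 x3 = 0"
    by (rule asym3_sym12) (simp add: h1_def mult_ac)
  have Z2: "asym3 h2 x1 x2 x3 = 0"
    by (rule asym3_sym23) (simp add: h2_def mult_ac)
  have A1: "Pf x1 x2 x3 * asym3 g1 x1 x2 x3 = asym3 f1 x1 x2 x3"
    using asym3_Pf[of x1 x2 x3 g1] asym3_add[of f1 h1 x1 x2 x3] Z1 by (simp add: P1)
  have A2: "Pf x1 x2 x3 * asym3 g2 x1 x2 x3 = asym3 f2 x1 x2 x3"
    using asym3_Pf[of x1 x2 x3 g2] asym3_add[of f2 h2 x1 x2 x3] Z2 by (simp add: P2)
  have A3: "Pf x1 x2 x3 * alt3 E F G x1 x2 x3 = asym3 (\<lambda>a b c. Pf a b c * (a^E*b^F*c^G)) x1 x2 x3"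
    unfolding alt3_def by (rule asym3_Pf)
  have pw: "f1 a b c + f2 a b c - Pf a b c * (a^E*b^F*c^G) = a^(E+2)*b^(F+1)*c^G - a^E*b^(F+1)*c^(G+2)" for a b c
    unfolding f1_def f2_def Pf_def by (simp add: power_add algebra_simps power2_eq_square)
  have "Pf x1 x2 x3 * ((\<Sum>k\<in>{0..p}. (-1)^k * alt3 (E-k) (F+k) G x1 x2 x3)
     + (\<Sum>k\<in>{0..q}. (-1)^k * alt3 E (F-k) (G+k) x1 x2 x3) - alt3 E F G x1 x2 x3)
     = asym3 f1 x1 x2 x3 + asym3 f2 x1 x2 x3 - asym3 (\<lambda>a b c. Pf a b c * (a^E*b^F*c^G)) x1 x2 x3"
    unfolding T1 T2 by (simp only: ring_distribs A1 A2 A3)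
  also have "... = asym3 (\<lambda>a b c. f1 a b c + f2 a b c - Pf a b c * (a^E*b^F*c^G)) x1 x2 x3"
    by (simp add: asym3_add asym3_diff)
  also have "... = asym3 (\<lambda>a b c. a^(E+2)*b^(F+1)*c^G - a^E*b^(F+1)*c^(G+2)) x1 x2 x3"
    by (simp only: pw)
  also have "... = alt3 (E+2) (F+1) G x1 x2 x3 - alt3 E (F+1) (G+2) x1 x2 x3"
    unfolding alt3_def by (rule asym3_diff)
  finally show ?thesis .
qed

definition rhs_h :: "nat \<Rightarrow> nat \<Rightarrow> complex \<Rightarrow> complex \<Rightarrow> complex \<Rightarrow> complex" where
  "rhs_h m1 m2 x1 x2 x3 =
      (\<Sum>l\<in>{0..min m1 m2}. \<Sum>k\<in>{0..m1 - l}.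
          (-1) ^ k * ((x1*x2*x3)^(2*l) * sl3_char (2*m1 - 2*k - 2*l) (2*m2 + k - 2*l) x1 x2 x3))
    + (\<Sum>l\<in>{0..min m1 m2}. \<Sum>k\<in>{0..m2 - l}.
          (-1) ^ k * ((x1*x2*x3)^(k+2*l) * sl3_char (2*m1 + k - 2*l) (2*m2 - 2*k - 2*l) x1 x2 x3))
    - (\<Sum>l\<in>{0..min m1 m2}. (x1*x2*x3)^(2*l) * sl3_char (2*m1 - 2*l) (2*m2 - 2*l) x1 x2 x3)"

lemma char_alt_shift: "Vd x1 x2 x3 * ((x1*x2*x3)^c * sl3_char a b x1 x2 x3) = alt3 (a+b+2+c) (b+1+c) c x1 x2 x3"
proof -
  have "Vd x1 x2 x3 * ((x1*x2*x3)^c * sl3_char a b x1 x2 x3) = (x1*x2*x3)^c * (Vd x1 x2 x3 * sl3_char a b x1 x2 x3)"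
    by (simp add: mult_ac)
  also have "... = alt3 (a+b+2+c) (b+1+c) (0+c) x1 x2 x3" unfolding char_alt alt3_shift ..
  finally show ?thesis by simp
qed

lemma homog:
  "Vd x1 x2 x3 * Pf x1 x2 x3 * (sl3_char m1 m2 (x1^2) (x2^2) (x3^2) - rhs_h m1 m2 x1 x2 x3) = 0"
proof -
  define L where "L = min m1 m2"
  define u where "u l = alt3 (2*m1+2*m2+4-2*l) (2*m2+2) (2*l) x1 x2 x3" for l
  define E where "E l = 2*m1+2*m2+2-2*l" for l
  define F where "F = 2*m2+1"
  define R where "R l = (\<Sum>k\<in>{0..m1-l}. (-1)^k * alt3 (E l-k) (F+k) (2*l) x1 x2 x3)
     + (\<Sum>k\<in>{0..m2-l}. (-1)^k * alt3 (E l) (F-k) (2*l+k) x1 x2 x3) - alt3 (E l) F (2*l) x1 x2 x3" for l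
  have lhs: "Vd x1 x2 x3 * Pf x1 x2 x3 * sl3_char m1 m2 (x1^2) (x2^2) (x3^2) = u 0"
  proof -
    have "Vd x1 x2 x3 * Pf x1 x2 x3 * sl3_char m1 m2 (x1^2) (x2^2) (x3^2)
        = Vd (x1^2) (x2^2) (x3^2) * sl3_char m1 m2 (x1^2) (x2^2) (x3^2)" by (simp add: Vd_sq)
    also have "... = alt3 (2*(m1+m2+2)) (2*(m2+1)) (2*0) x1 x2 x3" unfolding char_alt alt3_sq ..
    also have "2*(m1+m2+2) = 2*m1+2*m2+4-2*0" by simp
    also have "2*(m2+1) = 2*m2+2" by simp
    finally show ?thesis unfolding u_def .
  qed
  have rhs1: "Vd x1 x2 x3 * rhs_h m1 m2 x1 x2 x3 = (\<Sum>l\<in>{0..L}. R l)"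
  proof -
    have a1: "Vd x1 x2 x3 * (\<Sum>l\<in>{0..L}. \<Sum>k\<in>{0..m1 - l}.
          (-1) ^ k * ((x1*x2*x3)^(2*l) * sl3_char (2*m1 - 2*k - 2*l) (2*m2 + k - 2*l) x1 x2 x3))
        = (\<Sum>l\<in>{0..L}. \<Sum>k\<in>{0..m1-l}. (-1)^k * alt3 (E l-k) (F+k) (2*l) x1 x2 x3)"
      unfolding sum_distrib_left
    proof (intro sum.cong refl)
      fix l k assume l: "l \<in> {0..L}" and k: "k \<in> {0..m1-l}"
      have "Vd x1 x2 x3 * ((-1) ^ k * ((x1*x2*x3)^(2*l) * sl3_char (2*m1 - 2*k - 2*l) (2*m2 + k - 2*l) x1 x2 x3))
         = (-1)^k * (Vd x1 x2 x3 * ((x1*x2*x3)^(2*l) * sl3_char (2*m1 - 2*k - 2*l) (2*m2 + k - 2*l) x1 x2 x3))"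
        by (simp add: mult_ac)
      also have "... = (-1)^k * alt3 (2*m1 - 2*k - 2*l + (2*m2 + k - 2*l) + 2 + 2*l) (2*m2 + k - 2*l + 1 + 2*l) (2*l) x1 x2 x3"
        unfolding char_alt_shift ..
      also have "... = (-1)^k * alt3 (E l-k) (F+k) (2*l) x1 x2 x3"
      proof -
        have "2*m1 - 2*k - 2*l + (2*m2 + k - 2*l) + 2 + 2*l = E l - k"
             "2*m2 + k - 2*l + 1 + 2*l = F + k"
          using l k unfolding E_def F_def L_def by auto
        then show ?thesis by simp
      qed
      finally show "Vd x1 x2 x3 * ((-1) ^ k * ((x1*x2*x3)^(2*l) * sl3_char (2*m1 - 2*k - 2*l) (2*m2 + k - 2*l) x1 x2 x3))
         = (-1)^k * alt3 (E l-k) (F+k) (2*l) x1 x2 x3" .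
    qed
    have a2: "Vd x1 x2 x3 * (\<Sum>l\<in>{0..L}. \<Sum>k\<in>{0..m2 - l}.
          (-1) ^ k * ((x1*x2*x3)^(k+2*l) * sl3_char (2*m1 + k - 2*l) (2*m2 - 2*k - 2*l) x1 x2 x3))
        = (\<Sum>l\<in>{0..L}. \<Sum>k\<in>{0..m2-l}. (-1)^k * alt3 (E l) (F-k) (2*l+k) x1 x2 x3)"
      unfolding sum_distrib_left
    proof (intro sum.cong refl)
      fix l k assume l: "l \<in> {0..L}" and k: "k \<in> {0..m2-l}"
      have "Vd x1 x2 x3 * ((-1) ^ k * ((x1*x2*x3)^(k+2*l) * sl3_char (2*m1 + k - 2*l) (2*m2 - 2*k - 2*l) x1 x2 x3))
         = (-1)^k * (Vd x1 x2 x3 * ((x1*x2*x3)^(k+2*l) * sl3_char (2*m1 + k - 2*l) (2*m2 - 2*k - 2*l) x1 x2 x3))"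
        by (simp add: mult_ac)
      also have "... = (-1)^k * alt3 (2*m1 + k - 2*l + (2*m2 - 2*k - 2*l) + 2 + (k+2*l)) (2*m2 - 2*k - 2*l + 1 + (k+2*l)) (k+2*l) x1 x2 x3"
        unfolding char_alt_shift ..
      also have "... = (-1)^k * alt3 (E l) (F-k) (2*l+k) x1 x2 x3"
      proof -
        have e1: "2*m1 + k - 2*l + (2*m2 - 2*k - 2*l) + 2 + (k+2*l) = E l"
             and e2: "2*m2 - 2*k - 2*l + 1 + (k+2*l) = F - k" and e3: "k + 2*l = 2*l+k"
          using l k unfolding E_def F_def L_def by auto
        show ?thesis unfolding e1 e2 unfolding e3 ..
      qed
      finally show "Vd x1 x2 x3 * ((-1) ^ k * ((x1*x2*x3)^(k+2*l) * sl3_char (2*m1 + k - 2*l) (2*m2 - 2*k - 2*l) x1 x2 x3))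
         = (-1)^k * alt3 (E l) (F-k) (2*l+k) x1 x2 x3" .
    qed
    have a3: "Vd x1 x2 x3 * (\<Sum>l\<in>{0..L}. (x1*x2*x3)^(2*l) * sl3_char (2*m1 - 2*l) (2*m2 - 2*l) x1 x2 x3)
        = (\<Sum>l\<in>{0..L}. alt3 (E l) F (2*l) x1 x2 x3)"
      unfolding sum_distrib_left
    proof (intro sum.cong refl)
      fix l assume l: "l \<in> {0..L}"
      have "Vd x1 x2 x3 * ((x1*x2*x3)^(2*l) * sl3_char (2*m1 - 2*l) (2*m2 - 2*l) x1 x2 x3)
          = alt3 (2*m1 - 2*l + (2*m2 - 2*l) + 2 + 2*l) (2*m2 - 2*l + 1 + 2*l) (2*l) x1 x2 x3"
        by (rule char_alt_shift)
      also have "... = alt3 (E l) F (2*l) x1 x2 x3"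
      proof -
        have "2*m1 - 2*l + (2*m2 - 2*l) + 2 + 2*l = E l" "2*m2 - 2*l + 1 + 2*l = F"
          using l unfolding E_def F_def L_def by auto
        then show ?thesis by simp
      qed
      finally show "Vd x1 x2 x3 * ((x1*x2*x3)^(2*l) * sl3_char (2*m1 - 2*l) (2*m2 - 2*l) x1 x2 x3)
          = alt3 (E l) F (2*l) x1 x2 x3" .
    qed
    show ?thesis unfolding rhs_h_def L_def[symmetric] right_diff_distrib distrib_left a1 a2 a3 R_def
      by (simp add: sum.distrib sum_subtractf)
  qed
  have rhs2: "Pf x1 x2 x3 * R l = u l - u (Suc l)" if l: "l \<le> L" for l
  proof -
    have "Pf x1 x2 x3 * R l = alt3 (E l+2) (F+1) (2*l) x1 x2 x3 - alt3 (E l) (F+1) (2*l+2) x1 x2 x3"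
      unfolding R_def
      by (rule key[where p="m1-l" and q="m2-l"]) (use l in \<open>auto simp: E_def F_def L_def\<close>)
    also have "... = u l - u (Suc l)"
    proof -
      have "E l + 2 = 2*m1+2*m2+4-2*l" "F+1 = 2*m2+2" "E l = 2*m1+2*m2+4-2*Suc l" "2*l+2 = 2*Suc l"
        using l unfolding E_def F_def L_def by auto
      then show ?thesis unfolding u_def by simp
    qed
    finally show ?thesis .
  qed
  have uL: "u (Suc L) = 0"
  proof (cases "m1 \<le> m2")
    case True
    then have "2*m1+2*m2+4-2*Suc L = 2*m2+2" unfolding L_def by auto
    then show ?thesis unfolding u_def by simp
  next
    case False
    then have "2*Suc L = 2*m2+2" unfolding L_def by auto
    then show ?thesis unfolding u_def by simp
  qed
  have "Vd x1 x2 x3 * Pf x1 x2 x3 * rhs_h m1 m2 x1 x2 x3 = Pf x1 x2 x3 * (Vd x1 x2 x3 * rhs_h m1 m2 x1 x2 x3)"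
    by (simp add: mult_ac)
  also have "... = (\<Sum>l\<in>{0..L}. Pf x1 x2 x3 * R l)" unfolding rhs1 sum_distrib_left ..
  also have "... = (\<Sum>l\<in>{0..L}. u l - u (Suc l))" by (intro sum.cong refl) (simp add: rhs2)
  also have "... = u 0" using sum_telescope[of u L] uL by (simp add: atLeast0AtMost)
  finally show ?thesis using lhs by (simp add: right_diff_distrib)
qed

lemma cancel:
  fixes D :: "complex \<Rightarrow> complex \<Rightarrow> complex \<Rightarrow> complex"
  assumes zero: "\<And>y1 y2 y3. Vd y1 y2 y3 * Pf y1 y2 y3 * D y1 y2 y3 = 0"
    and cont: "isCont (\<lambda>t. D (x1+t) (x2+2*t) (x3+4*t)) 0"
  shows "D x1 x2 x3 = 0"
proof -
  have ne: "\<forall>\<^sub>F t in at (0::complex). t \<noteq> c" for c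
    by (rule eventually_neq_at_within)
  have "\<forall>\<^sub>F t in at (0::complex). t \<noteq> x1-x2 \<and> t \<noteq> (x1-x3)/3 \<and> t \<noteq> (x2-x3)/2 \<and>
      t \<noteq> -(x1+x2)/3 \<and> t \<noteq> -(x1+x3)/5 \<and> t \<noteq> -(x2+x3)/6"
    by (intro eventually_conj ne)
  then have "\<forall>\<^sub>F t in at (0::complex). D (x1+t) (x2+2*t) (x3+4*t) = 0"
  proof (rule eventually_mono)
    fix t :: complex
    assume h: "t \<noteq> x1-x2 \<and> t \<noteq> (x1-x3)/3 \<and> t \<noteq> (x2-x3)/2 \<and>
      t \<noteq> -(x1+x2)/3 \<and> t \<noteq> -(x1+x3)/5 \<and> t \<noteq> -(x2+x3)/6"
    have f1: "(x1+t) - (x2+2*t) \<noteq> 0" using h by (auto simp: field_simps)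
    have f2: "(x1+t) - (x3+4*t) \<noteq> 0" using h by (auto simp: field_simps)
    have f3: "(x2+2*t) - (x3+4*t) \<noteq> 0" using h by (auto simp: field_simps)
    have vd: "Vd (x1+t) (x2+2*t) (x3+4*t) \<noteq> 0"
      unfolding Vd_def using f1 f2 f3 by (simp only: mult_eq_0_iff de_Morgan_disj) simp
    have g1: "(x1+t) + (x2+2*t) \<noteq> 0" using h by (auto simp: field_simps add_eq_0_iff)
    have g2: "(x1+t) + (x3+4*t) \<noteq> 0" using h by (auto simp: field_simps add_eq_0_iff)
    have g3: "(x2+2*t) + (x3+4*t) \<noteq> 0" using h by (auto simp: field_simps add_eq_0_iff)
    have pf: "Pf (x1+t) (x2+2*t) (x3+4*t) \<noteq> 0"
      unfolding Pf_def using g1 g2 g3 by (simp only: mult_eq_0_iff de_Morgan_disj) simp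
    show "D (x1+t) (x2+2*t) (x3+4*t) = 0"
      using vd pf zero[of "x1+t" "x2+2*t" "x3+4*t"] by simp
  qed
  then have "((\<lambda>t. D (x1+t) (x2+2*t) (x3+4*t)) \<longlongrightarrow> 0) (at 0)"
    by (rule tendsto_eventually)
  moreover have "((\<lambda>t. D (x1+t) (x2+2*t) (x3+4*t)) \<longlongrightarrow> D x1 x2 x3) (at 0)"
    using cont unfolding isCont_def by simp
  ultimately show ?thesis using tendsto_unique[OF at_neq_bot] by blast
qed

lemma cont_D: "isCont (\<lambda>t. sl3_char m1 m2 ((x1+t)^2) ((x2+2*t)^2) ((x3+4*t)^2) - rhs_h m1 m2 (x1+t) (x2+2*t) (x3+4*t)) 0"
  unfolding sl3_char_def rhs_h_def by (intro continuous_intros)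

theorem theorem2:
  fixes m1 m2 :: nat and x1 x2 x3 :: complex
  assumes "x1 * x2 * x3 = 1"
  shows "adams2 (sl3_char m1 m2) x1 x2 x3 =
      (\<Sum>l\<in>{0..min m1 m2}. \<Sum>k\<in>{0..m1 - l}.
          (-1) ^ k * sl3_char (2*m1 - 2*k - 2*l) (2*m2 + k - 2*l) x1 x2 x3)
    + (\<Sum>l\<in>{0..min m1 m2}. \<Sum>k\<in>{0..m2 - l}.
          (-1) ^ k * sl3_char (2*m1 + k - 2*l) (2*m2 - 2*k - 2*l) x1 x2 x3)
    - (\<Sum>l\<in>{0..min m1 m2}. sl3_char (2*m1 - 2*l) (2*m2 - 2*l) x1 x2 x3)"
proof -
  have "sl3_char m1 m2 (x1^2) (x2^2) (x3^2) - rhs_h m1 m2 x1 x2 x3 = 0"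
    by (rule cancel[where D="\<lambda>y1 y2 y3. sl3_char m1 m2 (y1^2) (y2^2) (y3^2) - rhs_h m1 m2 y1 y2 y3"])
       (simp_all only: homog cont_D)
  then show ?thesis unfolding adams2_def using assms by (simp add: rhs_h_def)
qed

end
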